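(* Let $s\ge1$, let $q$ be a prime power and let $C^{(1)},\ldots,C^{(s)}\in\mathbb{F}_q^{\mathbb{N}\times\mathbb{N}_0}$ be finite-row generating matrices. Let $\mathbf{T}:\mathbb{N}_0\to\mathbb{N}_0$ with $\mathbf{T}(m)\le m$. If $C^{(1)},\ldots,C^{(s)}$ generate a $(\mathbf{T},s)$-sequence in base $q$ via Algorithm 1 (for some admissible choice of the bijections), then, for every choice of bijections $\psi_r$, $\lambda_{i,j}$, Algorithm 2 based on these matrices and the input sequence $(s_n)_{n\ge0}=(-n-1)_{n\ge0}$ (viewed in $\mathbb{Z}_q$) produces a $(\mathbf{T},s)$-sequence in base $q$.
   Context: $\mathbb{F}_q$ is the finite field with $q$ elements, $D_q=\{0,\ldots,q-1\}$; $\mathbb{Z}_q$ is the ring of $q$-adic integers, each $z\in\mathbb{Z}_q$ having a unique representation $z=\sum_{r\ge0}a_rq^r$, $a_r\in D_q$ (e.g. $-1=\sum_r(q-1)q^r$). A matrix $(c^{(i)}_{j,r})_{j\ge1,r\ge0}$ is finite-row if each row has finitely many nonzero entries. Algorithm 2: choose bijections $\psi_r:D_q\to\mathbb{F}_q$ ($r\ge0$), finite-row matrices $C^{(i)}=(c^{(i)}_{j,r})$, bijections $\lambda_{i,j}:\mathbb{F}_q\to D_q$ ($1\le i\le s$, $j\ge1$) and $(s_n)$ in $\mathbb{Z}_q$; with $s_n=\sum_ra_rq^r$ put $x_n^{(i)}=\sum_{j\ge1}\lambda_{i,j}(\sum_rc^{(i)}_{j,r}\psi_r(a_r))q^{-j}$,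 $\boldsymbol{x}_n=(x_n^{(1)},\ldots,x_n^{(s)})\in[0,1]^s$. Algorithm 1 is the same with $s_n=n$ and $\psi_r(0)=0$ for all large $r$. The $m$-digit truncation $[x_n^{(i)}]_{q,m}=\sum_{j=1}^m\lambda_{i,j}(\cdots)q^{-j}$ (truncation of this digit expansion), applied coordinatewise. Elementary interval in base $q$: $\prod_{i=1}^s[a_iq^{-d_i},(a_i+1)q^{-d_i})$, $d_i\ge0$, $0\le a_i<q^{d_i}$. For $0\le t\le m$, a $(t,m,s)$-net in base $q$ is a set of $q^m$ points in $[0,1)^s$ with exactly $q^t$ points in every elementary interval of volume $q^{t-m}$. A sequence $(\boldsymbol{x}_n)$ is a $(\mathbf{T},s)$-sequence in base $q$ if for all $k\ge0$ and $m$ with $\mathbf{T}(m)<m$ the points $[\boldsymbol{x}_n]_{q,m}$, $kq^m\le n<(k+1)q^m$, form a $(\mathbf{T}(m),m,s)$-net in base $q$. For Algorithm 1 over $\mathbb{F}_q$, producing a $(\mathbf{T},s)$-sequence is equivalent to: for every $m$ with $m>\mathbf{T}(m)$ and all integers $d_1,\ldots,d_s\ge0$ with $1\le d_1+\cdots+d_s\le m-\mathbf{T}(m)$, the vectors $(c^{(i)}_{j,0},\ldots,c^{(i)}_{j,m-1})\in\mathbb{F}_q^m$, $1\le j\le d_i$, $1\le i\le s$, are linearly independent. *)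

theory Defs
  imports Complex_Main
begin

text \<open>r-th q-adic digit of an integer z viewed in the q-adic integers
  (z = sum_r a_r q^r with a_r in {0..q-1}; e.g. -1 has all digits q-1).\<close>
definition qdigit :: "nat \<Rightarrow> int \<Rightarrow> nat \<Rightarrow> nat" where
  "qdigit q z r = nat ((z mod (int q) ^ Suc r) div (int q) ^ r)"

text \<open>j-th base-q digit of the i-th coordinate of the point generated from the
  q-adic input z: lam i j (sum_r c^(i)_{j,r} psi_r(a_r)); the sum is finite since
  the matrix rows are finite.\<close>
definition gen_digit ::
  "(nat \<Rightarrow> nat \<Rightarrow> 'a::{field,finite}) \<Rightarrow> (nat \<Rightarrow> nat \<Rightarrow> nat \<Rightarrow> 'a) \<Rightarrow>
   (nat \<Rightarrow> nat \<Rightarrow> 'a \<Rightarrow> nat) \<Rightarrow> int \<Rightarrow> nat \<Rightarrow> nat \<Rightarrow> nat" where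
  "gen_digit psi C lam z i j =
     lam i j (\<Sum>r\<in>{r. C i j r \<noteq> 0}. C i j r * psi r (qdigit (card (UNIV :: 'a set)) z r))"

definition trunc_point ::
  "(nat \<Rightarrow> nat \<Rightarrow> 'a::{field,finite}) \<Rightarrow> (nat \<Rightarrow> nat \<Rightarrow> nat \<Rightarrow> 'a) \<Rightarrow>
   (nat \<Rightarrow> nat \<Rightarrow> 'a \<Rightarrow> nat) \<Rightarrow> (nat \<Rightarrow> int) \<Rightarrow> nat \<Rightarrow> nat \<Rightarrow> nat \<Rightarrow> real" where
  "trunc_point psi C lam S m n i =
     (\<Sum>j=1..m. real (gen_digit psi C lam (S n) i j) / real (card (UNIV :: 'a set)) ^ j)"

definition is_net :: "nat \<Rightarrow> nat \<Rightarrow> nat \<Rightarrow> nat \<Rightarrow> nat set \<Rightarrow> (nat \<Rightarrow> nat \<Rightarrow> real) \<Rightarrow> bool" where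
  "is_net q t m s N P \<longleftrightarrow> t \<le> m \<and> finite N \<and> card N = q ^ m \<and>
     (\<forall>n\<in>N. \<forall>i\<in>{1..s}. 0 \<le> P n i \<and> P n i < 1) \<and>
     (\<forall>d a. (\<Sum>i=1..s. d i) = m - t \<and> (\<forall>i\<in>{1..s}. a i < q ^ d i) \<longrightarrow>
        card {n\<in>N. \<forall>i\<in>{1..s}. real (a i) / real q ^ d i \<le> P n i \<and>
                                 P n i < (real (a i) + 1) / real q ^ d i} = q ^ t)"

text \<open>(T,s)-sequence in base q; X m n is the m-digit truncation of the n-th point.\<close>
definition is_Ts_seq :: "nat \<Rightarrow> (nat \<Rightarrow> nat) \<Rightarrow> nat \<Rightarrow> (nat \<Rightarrow> nat \<Rightarrow> nat \<Rightarrow> real) \<Rightarrow> bool" where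
  "is_Ts_seq q T s X \<longleftrightarrow>
     (\<forall>k m. T m < m \<longrightarrow> is_net q (T m) m s {k * q ^ m..<(k + 1) * q ^ m} (X m))"

end

theory Submission
  imports Defs "HOL-Library.FuncSet"
begin


lemma qdigit_alt:
  assumes "q > 0" shows "qdigit q z r = nat (z div int q ^ r mod int q)"
proof -
  have e1: "z mod (int (q ^ r) * int q) = int (q ^ r) * (z div int (q ^ r) mod int q) + z mod int (q ^ r)"
    by (rule mod_mult2_eq')
  have "z mod int q ^ Suc r = int q ^ r * (z div int q ^ r mod int q) + z mod int q ^ r"
    using e1 by (simp add: mult.commute)
  moreover have "0 \<le> z mod int q ^ r" "z mod int q ^ r < int q ^ r" using assms by simp_all
  ultimately have "z mod int q ^ Suc r div int q ^ r = z div int q ^ r mod int q"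
    using assms by (simp add: div_pos_pos_trivial)
  then show ?thesis unfolding qdigit_def by simp
qed

lemma qdigit_less: "q > 0 \<Longrightarrow> qdigit q z r < q"
  by (simp add: qdigit_alt nat_less_iff)

lemma mod_from_digits:
  assumes "q > 0" "\<forall>r<m. z1 div int q ^ r mod int q = z2 div int q ^ r mod int q"
  shows "z1 mod int q ^ m = z2 mod int q ^ m"
  using assms(2)
proof (induction m)
  case 0 then show ?case by simp
next
  case (Suc m)
  have e: "z mod int q ^ Suc m = int q ^ m * (z div int q ^ m mod int q) + z mod int q ^ m" for z
    using mod_mult2_eq'[of z "q^m" q] by (simp add: mult.commute)
  show ?case using Suc by (simp only: e) simp
qed

lemma int_eq_from_digits:
  assumes "q > 0" "z1 div int q ^ m = z2 div int q ^ m"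
    "\<forall>r<m. qdigit q z1 r = qdigit q z2 r"
  shows "z1 = z2"
proof -
  have "\<forall>r<m. z1 div int q ^ r mod int q = z2 div int q ^ r mod int q"
  proof (intro allI impI)
    fix r assume "r < m"
    then have "nat (z1 div int q ^ r mod int q) = nat (z2 div int q ^ r mod int q)"
      using assms(3) by (simp add: qdigit_alt[OF assms(1)])
    moreover have "0 \<le> z1 div int q ^ r mod int q" "0 \<le> z2 div int q ^ r mod int q"
      using assms(1) by simp_all
    ultimately show "z1 div int q ^ r mod int q = z2 div int q ^ r mod int q" by simp
  qed
  then have "z1 mod int q ^ m = z2 mod int q ^ m" using mod_from_digits assms(1) by blast
  then show ?thesis using assms(2) by (metis div_mult_mod_eq)
qed

lemma qdigit_high:
  assumes "q > 0" "m \<le> r" "z1 div int q ^ m = z2 div int q ^ m"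
  shows "qdigit q z1 r = qdigit q z2 r"
proof -
  have "z div int q ^ r = z div int q ^ m div int q ^ (r - m)" for z
  proof -
    have "int q ^ r = int (q ^ m) * int (q ^ (r - m))" using assms(2)
      by (simp add: power_add[symmetric])
    then show ?thesis using div_mult2_eq'[of z "q^m" "q^(r-m)"] by simp
  qed
  then show ?thesis using assms by (simp add: qdigit_alt)
qed

fun Aval :: "nat \<Rightarrow> nat \<Rightarrow> (nat \<Rightarrow> nat) \<Rightarrow> nat" where
  "Aval q 0 e = 0" | "Aval q (Suc d) e = q * Aval q d e + e (Suc d)"

lemma P_eq: "q > 0 \<Longrightarrow> (\<Sum>j=1..m. real (e j) / real q ^ j) = real (Aval q m e) / real q ^ m"
proof (induction m)
  case 0 then show ?case by simp
next
  case (Suc m)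
  have "real q > 0" using Suc by simp
  then show ?case using Suc by (simp add: sum.cl_ivl_Suc field_simps)
qed

lemma A_bound: "(\<forall>j\<in>{1..d}. e j < q) \<Longrightarrow> Aval q d e < q ^ d"
proof (induction d)
  case 0 then show ?case by simp
next
  case (Suc d)
  then have h: "Aval q d e < q ^ d" "e (Suc d) < q" by auto
  then have "q * Aval q d e + e (Suc d) < q * Aval q d e + q" by simp
  also have "\<dots> = q * (Aval q d e + 1)" by simp
  also have "\<dots> \<le> q * q ^ d" using h(1) by (intro mult_left_mono) auto
  finally show ?case by simp
qed

lemma A_split:
  assumes "d \<le> m" "\<forall>j\<in>{1..m}. e j < q"
  shows "Aval q m e div q ^ (m - d) = Aval q d e"
  using assms
proof (induction m rule: dec_induct)
  case base then show ?case by simp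
next
  case (step m)
  have eq: "q ^ (Suc m - d) = q * q ^ (m - d)" using step(1) by (simp add: Suc_diff_le)
  have "e (Suc m) < q" using step by auto
  then have "(q * Aval q m e + e (Suc m)) div q = Aval q m e" by simp
  then have "Aval q (Suc m) e div q ^ (Suc m - d) = Aval q m e div q ^ (m - d)"
    by (simp add: eq div_mult2_eq)
  then show ?case using step by auto
qed

lemma A_cong: "(\<forall>j\<in>{1..d}. e j = f j) \<Longrightarrow> Aval q d e = Aval q d f"
  by (induction d) auto

lemma A_inj:
  assumes "\<forall>j\<in>{1..d}. e j < q" "\<forall>j\<in>{1..d}. f j < q" "Aval q d e = Aval q d f"
  shows "\<forall>j\<in>{1..d}. e j = f j"
  using assms
proof (induction d)
  case 0 then show ?case by simp
next
  case (Suc d)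
  have l: "e (Suc d) < q" "f (Suc d) < q" using Suc.prems by auto
  have eq: "q * Aval q d e + e (Suc d) = q * Aval q d f + f (Suc d)" using Suc.prems by simp
  then have "(q * Aval q d e + e (Suc d)) mod q = (q * Aval q d f + f (Suc d)) mod q" by simp
  then have 1: "e (Suc d) = f (Suc d)" using l by simp
  then have "Aval q d e = Aval q d f" using eq l(1) by simp
  then have "\<forall>j\<in>{1..d}. e j = f j" using Suc by auto
  then show ?case using 1 by (auto simp: le_Suc_eq)
qed

lemma A_surj:
  assumes "q > 0" "a < q ^ d"
  shows "\<exists>e. (\<forall>j\<in>{1..d}. e j < q) \<and> Aval q d e = a"
  using assms(2)
proof (induction d arbitrary: a)
  case 0 then show ?case by simp
next
  case (Suc d)
  have "a div q < q ^ d" using Suc.prems assms(1) by (simp add: div_less_iff_less_mult mult.commute)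
  then obtain e where e: "\<forall>j\<in>{1..d}. e j < q" "Aval q d e = a div q" using Suc.IH by blast
  define e' where "e' = e(Suc d := a mod q)"
  have "Aval q d e' = Aval q d e" by (rule A_cong) (auto simp: e'_def)
  then have "Aval q (Suc d) e' = a" using e by (simp add: e'_def)
  moreover have "\<forall>j\<in>{1..Suc d}. e' j < q" using e assms(1) by (auto simp: e'_def le_Suc_eq)
  ultimately show ?case by blast
qed

lemma interval_iff:
  assumes q: "q > 0" and d: "d \<le> m" and e: "\<forall>j\<in>{1..m}. e j < q"
  shows "(real a / real q ^ d \<le> (\<Sum>j=1..m. real (e j) / real q ^ j) \<and>
          (\<Sum>j=1..m. real (e j) / real q ^ j) < (real a + 1) / real q ^ d) \<longleftrightarrow> Aval q d e = a"
proof -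
  define X where "X = Aval q m e"
  define Q where "Q = q ^ (m - d)"
  have qm: "real q ^ m = real q ^ d * real Q" using d by (simp add: Q_def power_add[symmetric])
  have pos: "real q ^ d > 0" "real Q > 0" "real q > 0" using q by (simp_all add: Q_def)
  have xm: "real X / real q ^ m = (real X / real Q) / real q ^ d" by (simp add: qm mult.commute)
  have "real a / real q ^ d \<le> real X / real q ^ m \<longleftrightarrow> real a \<le> real X / real Q"
    unfolding xm using pos(1) by (simp only: divide_le_cancel) simp
  also have "\<dots> \<longleftrightarrow> real a * real Q \<le> real X" using pos(2) by (rule pos_le_divide_eq)
  also have "\<dots> \<longleftrightarrow> a * Q \<le> X" by (simp only: of_nat_mult[symmetric] of_nat_le_iff)
  finally have 1: "real a / real q ^ d \<le> real X / real q ^ m \<longleftrightarrow> a * Q \<le> X" .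
  have "real X / real q ^ m < (real a + 1) / real q ^ d \<longleftrightarrow> real X / real Q < real a + 1"
    unfolding xm using pos(1) by (simp only: divide_less_cancel) simp
  also have "\<dots> \<longleftrightarrow> real X < (real a + 1) * real Q" using pos(2) by (rule pos_divide_less_eq)
  also have "\<dots> \<longleftrightarrow> X < (a + 1) * Q"
  proof -
    have "(real a + 1) * real Q = real ((a + 1) * Q)" by (simp add: algebra_simps)
    then show ?thesis by (simp only: of_nat_less_iff)
  qed
  finally have 2: "real X / real q ^ m < (real a + 1) / real q ^ d \<longleftrightarrow> X < (a + 1) * Q" .
  have 3: "(a * Q \<le> X \<and> X < (a + 1) * Q) \<longleftrightarrow> X div Q = a"
  proof -
    have Q0: "Q > 0" using pos by simp
    have "X div Q = a \<longleftrightarrow> a \<le> X div Q \<and> X div Q < a + 1" by auto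
    also have "\<dots> \<longleftrightarrow> a * Q \<le> X \<and> X < (a + 1) * Q"
      using Q0 by (simp add: less_eq_div_iff_mult_less_eq div_less_iff_less_mult)
    finally show ?thesis by simp
  qed
  have 4: "X div Q = Aval q d e" unfolding X_def Q_def by (rule A_split[OF d e])
  show ?thesis using 1 2 3 4 P_eq[OF q] by (simp add: X_def)
qed

lemma P_bounds:
  assumes q: "q > 0" and e: "\<forall>j\<in>{1..m}. e j < q"
  shows "0 \<le> (\<Sum>j=1..m. real (e j) / real q ^ j) \<and> (\<Sum>j=1..m. real (e j) / real q ^ j) < 1"
proof -
  have "Aval q m e < q ^ m" using e A_bound by blast
  then have "real (Aval q m e) < real q ^ m" by (metis of_nat_less_iff of_nat_power)
  moreover have "(\<Sum>j=1..m. real (e j) / real q ^ j) = real (Aval q m e) / real q ^ m" by (rule P_eq[OF q])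
  moreover have "real q ^ m > 0" using q by simp
  ultimately show ?thesis by (simp add: divide_less_eq_1_pos)
qed



definition lin :: "(nat \<Rightarrow> nat \<Rightarrow> nat \<Rightarrow> 'a::field) \<Rightarrow> nat \<Rightarrow> nat \<Rightarrow> nat \<Rightarrow> (nat \<Rightarrow> 'a) \<Rightarrow> 'a" where
  "lin C m i j y = (\<Sum>r\<in>{r. C i j r \<noteq> 0 \<and> r < m}. C i j r * y r)"

definition hi :: "(nat \<Rightarrow> nat \<Rightarrow> nat \<Rightarrow> 'a::{field,finite}) \<Rightarrow> (nat \<Rightarrow> nat \<Rightarrow> 'a) \<Rightarrow> nat \<Rightarrow> int \<Rightarrow> nat \<Rightarrow> nat \<Rightarrow> 'a" where
  "hi C psi m z i j = (\<Sum>r\<in>{r. C i j r \<noteq> 0 \<and> m \<le> r}. C i j r * psi r (qdigit (card (UNIV :: 'a set)) z r))"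

definition Yv :: "(nat \<Rightarrow> nat \<Rightarrow> 'a::{field,finite}) \<Rightarrow> nat \<Rightarrow> int \<Rightarrow> nat \<Rightarrow> 'a" where
  "Yv psi m z = (\<lambda>r\<in>{..<m}. psi r (qdigit (card (UNIV :: 'a set)) z r))"

lemma split_sum:
  fixes C :: "nat \<Rightarrow> nat \<Rightarrow> nat \<Rightarrow> 'a::{field,finite}"
  assumes "finite {r. C i j r \<noteq> 0}"
  shows "(\<Sum>r\<in>{r. C i j r \<noteq> 0}. C i j r * psi r (qdigit (card (UNIV :: 'a set)) z r))
     = lin C m i j (Yv psi m z) + hi C psi m z i j"
proof -
  have u: "{r. C i j r \<noteq> 0} = {r. C i j r \<noteq> 0 \<and> r < m} \<union> {r. C i j r \<noteq> 0 \<and> m \<le> r}" by auto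
  have f1: "finite {r. C i j r \<noteq> 0 \<and> r < m}" "finite {r. C i j r \<noteq> 0 \<and> m \<le> r}"
    using assms by (auto intro: finite_subset)
  have l: "lin C m i j (Yv psi m z) = (\<Sum>r\<in>{r. C i j r \<noteq> 0 \<and> r < m}. C i j r * psi r (qdigit (card (UNIV :: 'a set)) z r))"
    unfolding lin_def Yv_def by (rule sum.cong) auto
  show ?thesis unfolding l hi_def
    by (subst u, rule sum.union_disjoint) (use f1 in auto)
qed

lemma bij_from_card:
  assumes "inj_on f A" "f ` A \<subseteq> B" "finite B" "card A = card B"
  shows "bij_betw f A B"
proof -
  have "card (f ` A) = card B" using assms by (simp add: card_image)
  then have "f ` A = B" using assms card_subset_eq by blast
  then show ?thesis using assms by (simp add: bij_betw_def)
qed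

lemma card_pre:
  assumes "bij_betw f A B"
  shows "card {x\<in>A. P (f x)} = card {y\<in>B. P y}"
proof -
  have "bij_betw f {x\<in>A. P (f x)} {y\<in>B. P y}"
    using assms unfolding bij_betw_def inj_on_def by auto
  then show ?thesis by (rule bij_betw_same_card)
qed

lemma Yv_bij:
  fixes psi :: "nat \<Rightarrow> nat \<Rightarrow> 'a::{field,finite}"
  assumes psi: "\<forall>r. bij_betw (psi r) {..<card (UNIV :: 'a set)} UNIV"
    and N: "finite N" "card N = card (UNIV :: 'a set) ^ m" "inj_on S N"
       "\<forall>n\<in>N. S n div int (card (UNIV :: 'a set)) ^ m = w"
  shows "bij_betw (\<lambda>n. Yv psi m (S n)) N (PiE {..<m} (\<lambda>_. (UNIV :: 'a set)))"
proof (rule bij_from_card)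
  let ?q = "card (UNIV :: 'a set)"
  have q: "?q > 0" by (simp add: finite_UNIV_card_ge_0)
  show "inj_on (\<lambda>n. Yv psi m (S n)) N"
  proof (rule inj_onI)
    fix n1 n2 assume n: "n1 \<in> N" "n2 \<in> N" "Yv psi m (S n1) = Yv psi m (S n2)"
    have "\<forall>r<m. qdigit ?q (S n1) r = qdigit ?q (S n2) r"
    proof (intro allI impI)
      fix r assume r: "r < m"
      have "psi r (qdigit ?q (S n1) r) = psi r (qdigit ?q (S n2) r)"
        using fun_cong[OF n(3), of r] r by (simp add: Yv_def)
      moreover have "inj_on (psi r) {..<?q}" using psi bij_betw_imp_inj_on by blast
      ultimately show "qdigit ?q (S n1) r = qdigit ?q (S n2) r"
        using qdigit_less[OF q] by (meson inj_onD lessThan_iff)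
    qed
    moreover have "S n1 div int ?q ^ m = S n2 div int ?q ^ m" using N(4) n by simp
    ultimately have "S n1 = S n2" using int_eq_from_digits[OF q] by blast
    then show "n1 = n2" using inj_onD[OF N(3)] n by blast
  qed
  show "(\<lambda>n. Yv psi m (S n)) ` N \<subseteq> PiE {..<m} (\<lambda>_. UNIV)"
    unfolding Yv_def by (simp add: image_subset_iff restrict_PiE_iff)
  show "finite (PiE {..<m} (\<lambda>_. (UNIV :: 'a set)))" by (simp add: finite_PiE)
  show "card N = card (PiE {..<m} (\<lambda>_. (UNIV :: 'a set)))"
    using N(2) by (simp add: card_PiE)
qed

lemma gd_less:
  assumes "\<forall>i\<in>{1..s}. \<forall>j\<ge>1. bij_betw (lam i j) UNIV {..<card (UNIV :: 'a set)}"
    "i \<in> {1..s}" "j \<ge> 1"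
  shows "gen_digit psi (C :: nat \<Rightarrow> nat \<Rightarrow> nat \<Rightarrow> 'a::{field,finite}) lam z i j < card (UNIV :: 'a set)"
proof -
  have "bij_betw (lam i j) UNIV {..<card (UNIV :: 'a set)}" using assms by blast
  then show ?thesis unfolding gen_digit_def using bij_betw_apply by fastforce
qed

lemma count_eq:
  fixes C :: "nat \<Rightarrow> nat \<Rightarrow> nat \<Rightarrow> 'a::{field,finite}"
  assumes psi: "\<forall>r. bij_betw (psi r) {..<card (UNIV :: 'a set)} UNIV"
    and lam: "\<forall>i\<in>{1..s}. \<forall>j\<ge>1. bij_betw (lam i j) UNIV {..<card (UNIV :: 'a set)}"
    and fin: "\<forall>i\<in>{1..s}. \<forall>j\<ge>1. finite {r. C i j r \<noteq> 0}"
    and N: "finite N" "card N = card (UNIV :: 'a set) ^ m" "inj_on S N"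
       "\<forall>n\<in>N. S n div int (card (UNIV :: 'a set)) ^ m = w" "n1 \<in> N"
    and f: "\<forall>i\<in>{1..s}. \<forall>j\<in>{1..d i}. f i j < card (UNIV :: 'a set)"
  shows "card {n\<in>N. \<forall>i\<in>{1..s}. \<forall>j\<in>{1..d i}. gen_digit psi C lam (S n) i j = f i j}
    = card {y\<in>PiE {..<m} (\<lambda>_. UNIV). \<forall>i\<in>{1..s}. \<forall>j\<in>{1..d i}.
          lin C m i j y = inv_into UNIV (lam i j) (f i j) - hi C psi m (S n1) i j}"
proof -
  let ?q = "card (UNIV :: 'a set)"
  have q: "?q > 0" by (simp add: finite_UNIV_card_ge_0)
  have key: "(gen_digit psi C lam (S n) i j = f i j) \<longleftrightarrow>
      lin C m i j (Yv psi m (S n)) = inv_into UNIV (lam i j) (f i j) - hi C psi m (S n1) i j"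
    if n: "n \<in> N" and i: "i \<in> {1..s}" "j \<in> {1..d i}" for n i j
  proof -
    have j1: "j \<ge> 1" using i by simp
    have b: "bij_betw (lam i j) UNIV {..<?q}" using lam i j1 by blast
    have hi_eq: "hi C psi m (S n) i j = hi C psi m (S n1) i j"
      unfolding hi_def
    proof (rule sum.cong)
      fix r assume "r \<in> {r. C i j r \<noteq> 0 \<and> m \<le> r}"
      then have "m \<le> r" by simp
      moreover have "S n div int ?q ^ m = S n1 div int ?q ^ m" using N(4) N(5) n by simp
      ultimately show "C i j r * psi r (qdigit ?q (S n) r) = C i j r * psi r (qdigit ?q (S n1) r)"
        using qdigit_high[OF q, of m r "S n" "S n1"] by simp
    qed simp
    have gd: "gen_digit psi C lam (S n) i j = lam i j (lin C m i j (Yv psi m (S n)) + hi C psi m (S n1) i j)"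
      unfolding gen_digit_def using split_sum[of C i j psi "S n" m] fin i j1 hi_eq by simp
    have fi: "f i j \<in> lam i j ` UNIV" using b f i by (simp add: bij_betw_def)
    have inj: "inj (lam i j)" using b by (simp add: bij_betw_def)
    have "lam i j x = f i j \<longleftrightarrow> x = inv_into UNIV (lam i j) (f i j)" for x
    proof
      assume "lam i j x = f i j"
      then show "x = inv_into UNIV (lam i j) (f i j)" using inv_into_f_f[OF inj, of x] by simp
    next
      assume "x = inv_into UNIV (lam i j) (f i j)"
      then show "lam i j x = f i j" using f_inv_into_f[OF fi] by simp
    qed
    then show ?thesis unfolding gd by (simp add: eq_diff_eq)
  qed
  define P where "P y \<longleftrightarrow> (\<forall>i\<in>{1..s}. \<forall>j\<in>{1..d i}.
          lin C m i j y = inv_into UNIV (lam i j) (f i j) - hi C psi m (S n1) i j)" for y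
  have "{n\<in>N. \<forall>i\<in>{1..s}. \<forall>j\<in>{1..d i}. gen_digit psi C lam (S n) i j = f i j}
      = {n\<in>N. P (Yv psi m (S n))}"
  proof (rule Collect_cong)
    fix n
    show "(n \<in> N \<and> (\<forall>i\<in>{1..s}. \<forall>j\<in>{1..d i}. gen_digit psi C lam (S n) i j = f i j)) \<longleftrightarrow>
      (n \<in> N \<and> P (Yv psi m (S n)))"
    proof (cases "n \<in> N")
      case True
      have "(\<forall>i\<in>{1..s}. \<forall>j\<in>{1..d i}. gen_digit psi C lam (S n) i j = f i j) \<longleftrightarrow> P (Yv psi m (S n))"
        unfolding P_def using key[OF True] by (intro ball_cong refl) simp
      then show ?thesis using True by simp
    qed simp
  qed
  also have "card \<dots> = card {y\<in>PiE {..<m} (\<lambda>_. UNIV). P y}"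
    by (rule card_pre[OF Yv_bij[OF psi N(1-4)], where P = P])
  also have "{y\<in>PiE {..<m} (\<lambda>_. UNIV). P y} = {y\<in>PiE {..<m} (\<lambda>_. UNIV). \<forall>i\<in>{1..s}. \<forall>j\<in>{1..d i}.
          lin C m i j y = inv_into UNIV (lam i j) (f i j) - hi C psi m (S n1) i j}"
    unfolding P_def ..
  finally show ?thesis by simp
qed



lemma interval_set:
  fixes C :: "nat \<Rightarrow> nat \<Rightarrow> nat \<Rightarrow> 'a::{field,finite}"
    and psi :: "nat \<Rightarrow> nat \<Rightarrow> 'a" and lam :: "nat \<Rightarrow> nat \<Rightarrow> 'a \<Rightarrow> nat"
    and S :: "nat \<Rightarrow> int" and N :: "nat set" and a d :: "nat \<Rightarrow> nat"
  assumes lam: "\<forall>i\<in>{1..s}. \<forall>j\<ge>1. bij_betw (lam i j) UNIV {..<card (UNIV :: 'a set)}"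
    and d: "\<forall>i\<in>{1..s}. d i \<le> m"
  shows "{n\<in>N. \<forall>i\<in>{1..s}. real (a i) / real (card (UNIV :: 'a set)) ^ d i \<le> trunc_point psi C lam S m n i \<and>
                 trunc_point psi C lam S m n i < (real (a i) + 1) / real (card (UNIV :: 'a set)) ^ d i}
    = {n\<in>N. \<forall>i\<in>{1..s}. Aval (card (UNIV :: 'a set)) (d i) (gen_digit psi C lam (S n) i) = a i}"
proof -
  let ?q = "card (UNIV :: 'a set)"
  have q: "?q > 0" by (simp add: finite_UNIV_card_ge_0)
  have "(real (a i) / real ?q ^ d i \<le> trunc_point psi C lam S m n i \<and>
                 trunc_point psi C lam S m n i < (real (a i) + 1) / real ?q ^ d i)
       \<longleftrightarrow> Aval ?q (d i) (gen_digit psi C lam (S n) i) = a i" if i: "i \<in> {1..s}" for n i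
    unfolding trunc_point_def
    by (rule interval_iff[OF q]) (use d i gd_less[OF lam i] in auto)
  then show ?thesis by auto
qed

theorem proposition1:
  fixes C :: "nat \<Rightarrow> nat \<Rightarrow> nat \<Rightarrow> 'a::{field,finite}"
    and s :: nat and T :: "nat \<Rightarrow> nat"
  assumes "s \<ge> 1"
    and "\<forall>m. T m \<le> m"
    and "\<forall>i\<in>{1..s}. \<forall>j\<ge>1. finite {r. C i j r \<noteq> 0}"
    and "\<exists>psi lam. (\<forall>r. bij_betw (psi r) {..<(card (UNIV :: 'a set))} UNIV) \<and>
                  (\<exists>R. \<forall>r\<ge>R. psi r 0 = 0) \<and>
                  (\<forall>i\<in>{1..s}. \<forall>j\<ge>1. bij_betw (lam i j) UNIV {..<(card (UNIV :: 'a set))}) \<and>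
                  is_Ts_seq (card (UNIV :: 'a set)) T s (trunc_point psi C lam (\<lambda>n. int n))"
  shows "\<forall>psi lam. (\<forall>r. bij_betw (psi r) {..<(card (UNIV :: 'a set))} UNIV) \<and>
                  (\<forall>i\<in>{1..s}. \<forall>j\<ge>1. bij_betw (lam i j) UNIV {..<(card (UNIV :: 'a set))}) \<longrightarrow>
                  is_Ts_seq (card (UNIV :: 'a set)) T s (trunc_point psi C lam (\<lambda>n. - int n - 1))"
proof (intro allI impI)
  let ?q = "card (UNIV :: 'a set)"
  have q: "?q > 0" by (simp add: finite_UNIV_card_ge_0)
  fix psi :: "nat \<Rightarrow> nat \<Rightarrow> 'a" and lam :: "nat \<Rightarrow> nat \<Rightarrow> 'a \<Rightarrow> nat"
  assume "(\<forall>r. bij_betw (psi r) {..<?q} UNIV) \<and>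
          (\<forall>i\<in>{1..s}. \<forall>j\<ge>1. bij_betw (lam i j) UNIV {..<?q})"
  then have psi: "\<forall>r. bij_betw (psi r) {..<?q} UNIV"
    and lam: "\<forall>i\<in>{1..s}. \<forall>j\<ge>1. bij_betw (lam i j) UNIV {..<?q}" by auto
  from assms(4) obtain psi0 lam0 where psi0: "\<forall>r. bij_betw (psi0 r) {..<?q} UNIV"
    and lam0: "\<forall>i\<in>{1..s}. \<forall>j\<ge>1. bij_betw (lam0 i j) UNIV {..<?q}"
    and seq0: "is_Ts_seq ?q T s (trunc_point psi0 C lam0 (\<lambda>n. int n))" by blast
  define S where "S = (\<lambda>n::nat. - int n - 1)"
  show "is_Ts_seq ?q T s (trunc_point psi C lam (\<lambda>n. - int n - 1))"
    unfolding is_Ts_seq_def S_def[symmetric]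
  proof (intro allI impI)
    fix k m assume Tm: "T m < m"
    define N where "N = {k * ?q ^ m..<(k + 1) * ?q ^ m}"
    define N0 where "N0 = {0..<?q ^ m}"
    have H0: "is_net ?q (T m) m s N0 (trunc_point psi0 C lam0 int m)"
      using seq0[unfolded is_Ts_seq_def, rule_format, of m 0] Tm unfolding N0_def by simp
    have finN: "finite N" "card N = ?q ^ m" by (simp_all add: N_def)
    have finN0: "finite N0" "card N0 = ?q ^ m" by (simp_all add: N0_def)
    have injS: "inj_on S N" by (auto simp: S_def inj_on_def)
    have inj0: "inj_on int N0" by (auto simp: inj_on_def)
    have blockS: "\<forall>n\<in>N. S n div int ?q ^ m = - int k - 1"
    proof
      fix n assume "n \<in> N"
      define r where "r = n - k * ?q ^ m"
      have r: "n = k * ?q ^ m + r" "r < ?q ^ m" using \<open>n \<in> N\<close> unfolding N_def r_def by auto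
      have "S n = (int (?q ^ m) - 1 - int r) + (- int k - 1) * int (?q ^ m)"
        unfolding S_def r by (simp add: algebra_simps)
      moreover have "(int (?q ^ m) - 1 - int r) div int (?q ^ m) = 0"
        using r(2) by (intro div_pos_pos_trivial) auto
      ultimately show "S n div int ?q ^ m = - int k - 1" using q by simp
    qed
    have block0: "\<forall>n\<in>N0. int n div int ?q ^ m = 0"
      by (auto simp: N0_def div_pos_pos_trivial)
    have n1: "k * ?q ^ m \<in> N" using q by (simp add: N_def)
    have n0: "0 \<in> N0" using q by (simp add: N0_def)
    show "is_net ?q (T m) m s N (trunc_point psi C lam S m)"
      unfolding is_net_def
    proof (intro conjI)
      show "T m \<le> m" using assms(2) by blast
      show "finite N" "card N = ?q ^ m" by (fact finN)+
      show "\<forall>n\<in>N. \<forall>i\<in>{1..s}. 0 \<le> trunc_point psi C lam S m n i \<and> trunc_point psi C lam S m n i < 1"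
        unfolding trunc_point_def using P_bounds[OF q] gd_less[OF lam] by simp
      show "\<forall>d a. (\<Sum>i = 1..s. d i) = m - T m \<and> (\<forall>i\<in>{1..s}. a i < ?q ^ d i) \<longrightarrow>
          card {n \<in> N. \<forall>i\<in>{1..s}. real (a i) / real ?q ^ d i \<le> trunc_point psi C lam S m n i \<and>
             trunc_point psi C lam S m n i < (real (a i) + 1) / real ?q ^ d i} = ?q ^ T m"
      proof (intro allI impI)
        fix d a assume da: "(\<Sum>i = 1..s. d i) = m - T m \<and> (\<forall>i\<in>{1..s}. a i < ?q ^ d i)"
        have dle: "\<forall>i\<in>{1..s}. d i \<le> m"
        proof
          fix i assume "i \<in> {1..s}"
          then have "d i \<le> (\<Sum>i = 1..s. d i)" by (intro member_le_sum) auto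
          then show "d i \<le> m" using da by simp
        qed
        have "\<forall>i\<in>{1..s}. \<exists>e. (\<forall>j\<in>{1..d i}. e j < ?q) \<and> Aval ?q (d i) e = a i"
          using da A_surj[OF q] by blast
        then obtain f where f: "\<forall>i\<in>{1..s}. (\<forall>j\<in>{1..d i}. f i j < ?q) \<and> Aval ?q (d i) (f i) = a i"
          by metis
        have f1: "\<forall>i\<in>{1..s}. \<forall>j\<in>{1..d i}. f i j < ?q" using f by blast
        define \<beta> where "\<beta> i j = inv_into UNIV (lam i j) (f i j) - hi C psi m (S (k * ?q ^ m)) i j" for i j
        define f0 where "f0 i j = lam0 i j (\<beta> i j + hi C psi0 m (int 0) i j)" for i j
        define a0 where "a0 i = Aval ?q (d i) (f0 i)" for i
        have f0l: "\<forall>i\<in>{1..s}. \<forall>j\<in>{1..d i}. f0 i j < ?q"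
        proof (intro ballI)
          fix i j assume "i \<in> {1..s}" "j \<in> {1..d i}"
          then have "bij_betw (lam0 i j) UNIV {..<?q}" using lam0 by auto
          then show "f0 i j < ?q" unfolding f0_def using bij_betw_apply by fastforce
        qed
        have a0l: "\<forall>i\<in>{1..s}. a0 i < ?q ^ d i" unfolding a0_def using f0l A_bound by blast
        have digit_set: "{n\<in>M. \<forall>i\<in>{1..s}. Aval ?q (d i) (g n i) = Aval ?q (d i) (h i)}
            = {n\<in>M. \<forall>i\<in>{1..s}. \<forall>j\<in>{1..d i}. g n i j = h i j}"
          if "\<forall>n\<in>M. \<forall>i\<in>{1..s}. \<forall>j\<in>{1..d i}. g n i j < ?q" "\<forall>i\<in>{1..s}. \<forall>j\<in>{1..d i}. h i j < ?q"
          for M g h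
        proof -
          have "Aval ?q (d i) (g n i) = Aval ?q (d i) (h i) \<longleftrightarrow> (\<forall>j\<in>{1..d i}. g n i j = h i j)"
            if "n \<in> M" "i \<in> {1..s}" for n i
            using A_inj[of "d i" "g n i" ?q "h i"] A_cong[of "d i" "g n i" "h i" ?q] that
              \<open>\<forall>n\<in>M. \<forall>i\<in>{1..s}. \<forall>j\<in>{1..d i}. g n i j < ?q\<close>
              \<open>\<forall>i\<in>{1..s}. \<forall>j\<in>{1..d i}. h i j < ?q\<close> by blast
          then show ?thesis by auto
        qed
        have "card {n \<in> N. \<forall>i\<in>{1..s}. real (a i) / real ?q ^ d i \<le> trunc_point psi C lam S m n i \<and>
             trunc_point psi C lam S m n i < (real (a i) + 1) / real ?q ^ d i}
          = card {n\<in>N. \<forall>i\<in>{1..s}. Aval ?q (d i) (gen_digit psi C lam (S n) i) = Aval ?q (d i) (f i)}"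
          using interval_set[OF lam dle, where N=N and a=a and psi=psi and S=S] f by simp
        also have "\<dots> = card {n\<in>N. \<forall>i\<in>{1..s}. \<forall>j\<in>{1..d i}. gen_digit psi C lam (S n) i j = f i j}"
          by (subst digit_set) (use gd_less[OF lam] f1 in auto)
        also have "\<dots> = card {y\<in>PiE {..<m} (\<lambda>_. UNIV). \<forall>i\<in>{1..s}. \<forall>j\<in>{1..d i}. lin C m i j y = \<beta> i j}"
          unfolding \<beta>_def by (rule count_eq[OF psi lam assms(3) finN injS blockS n1 f1])
        also have "\<dots> = card {y\<in>PiE {..<m} (\<lambda>_. UNIV). \<forall>i\<in>{1..s}. \<forall>j\<in>{1..d i}.
            lin C m i j y = inv_into UNIV (lam0 i j) (f0 i j) - hi C psi0 m (int 0) i j}"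
        proof -
          have "inv_into UNIV (lam0 i j) (f0 i j) - hi C psi0 m (int 0) i j = \<beta> i j"
            if "i \<in> {1..s}" "j \<in> {1..d i}" for i j
          proof -
            have "inj (lam0 i j)" using lam0 that by (auto simp: bij_betw_def)
            then show ?thesis unfolding f0_def by simp
          qed
          then show ?thesis by (intro arg_cong[where f=card]) auto
        qed
        also have "\<dots> = card {n\<in>N0. \<forall>i\<in>{1..s}. \<forall>j\<in>{1..d i}. gen_digit psi0 C lam0 (int n) i j = f0 i j}"
          by (rule count_eq[OF psi0 lam0 assms(3) finN0 inj0 block0 n0 f0l, symmetric])
        also have "\<dots> = card {n\<in>N0. \<forall>i\<in>{1..s}. Aval ?q (d i) (gen_digit psi0 C lam0 (int n) i) = a0 i}"
          unfolding a0_def by (subst digit_set) (use gd_less[OF lam0] f0l in auto)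
        also have "\<dots> = card {n \<in> N0. \<forall>i\<in>{1..s}. real (a0 i) / real ?q ^ d i \<le> trunc_point psi0 C lam0 int m n i \<and>
             trunc_point psi0 C lam0 int m n i < (real (a0 i) + 1) / real ?q ^ d i}"
          using interval_set[OF lam0 dle, where N=N0 and a=a0 and psi=psi0 and S=int] by simp
        also have "\<dots> = ?q ^ T m"
          using H0[unfolded is_net_def] da a0l by (elim conjE) (drule spec[of _ d], drule spec[of _ a0], simp)
        finally show "card {n \<in> N. \<forall>i\<in>{1..s}. real (a i) / real ?q ^ d i \<le> trunc_point psi C lam S m n i \<and>
             trunc_point psi C lam S m n i < (real (a i) + 1) / real ?q ^ d i} = ?q ^ T m" .
      qed
    qed
  qed
qed


end
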